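(* Identify the dual group of $\mathbb{T}^2$ with $\mathbb{Z}^2$ and let $K = \bigcup_{n=1}^\infty \{n\} \times \{-n,\dots,n\} \subset \mathbb{Z}^2$. Then $K$ is strictly positive definite, while the set $K_1 = \{\gamma \in \mathbb{Z} : \{\omega \in \mathbb{Z} : (\gamma,\omega) \in K\} \text{ is strictly positive definite in } \mathbb{Z}\}$ is empty.
   Context: $\mathbb{Z}^r$ is regarded as the dual group of $\mathbb{T}^r$ ($\mathbb{T}$ the complex numbers of modulus one) via $\gamma(z) = \prod_{k=1}^r z_k^{\gamma_k}$. A trigonometric polynomial on $\mathbb{Z}^r$ is a function of the form $\gamma \mapsto \sum_{i=1}^n c_i \gamma(x_i)$ with $x_i \in \mathbb{T}^r$, $c_i \in \mathbb{C}$. A subset $K \subset \mathbb{Z}^r$ is strictly positive definite if the only trigonometric polynomial vanishing at every point of $K$ is the identically zero function. *)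

theory Defs
  imports "HOL-Analysis.Analysis"
begin

text \<open>Z^r is represented as int^'r, T^r as complex^'r with all components of modulus one.
  The character gamma evaluated at z is the product of z_k powi gamma_k.\<close>

definition char_val :: "int^'r \<Rightarrow> complex^'r \<Rightarrow> complex" where
  "char_val \<gamma> z = (\<Prod>k\<in>UNIV. (z $ k) powi (\<gamma> $ k))"

definition torus :: "(complex^'r) set" where
  "torus = {z. \<forall>k. norm (z $ k) = 1}"

definition trig_poly :: "(int^'r \<Rightarrow> complex) \<Rightarrow> bool" where
  "trig_poly f \<longleftrightarrow> (\<exists>(n::nat) (c::nat \<Rightarrow> complex) (x::nat \<Rightarrow> complex^'r).
     (\<forall>i<n. x i \<in> torus) \<and> f = (\<lambda>\<gamma>. \<Sum>i<n. c i * char_val \<gamma> (x i)))"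

definition strictly_pd :: "(int^'r) set \<Rightarrow> bool" where
  "strictly_pd K \<longleftrightarrow>
     (\<forall>f. trig_poly f \<longrightarrow> (\<forall>\<gamma>\<in>K. f \<gamma> = 0) \<longrightarrow> f = (\<lambda>_. 0))"

definition K_ex :: "(int^2) set" where
  "K_ex = {\<gamma>. \<gamma> $ 1 \<ge> 1 \<and> \<bar>\<gamma> $ 2\<bar> \<le> \<gamma> $ 1}"

definition pair2 :: "int \<Rightarrow> int \<Rightarrow> int^2" where
  "pair2 g w = (\<chi> i. if i = 1 then g else w)"

end

theory Submission
  imports Defs "HOL-Library.Real_Mod"
begin

lemma vander:
  fixes e d :: "'a \<Rightarrow> complex"
  assumes "finite P" "inj_on e P" "\<forall>p\<in>P. e p \<noteq> 0"
    "\<forall>m. M \<le> m \<and> m < M + int (card P) \<longrightarrow> (\<Sum>p\<in>P. d p * e p powi m) = 0"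
  shows "\<forall>p\<in>P. d p = 0"
  using assms
proof (induction P arbitrary: d M rule: finite_induct)
  case empty
  then show ?case by simp
next
  case (insert q P)
  define d' where "d' p = d p * (e p - e q)" for p
  have inj: "inj_on e P" using insert.prems by (auto simp: inj_on_def)
  have nz: "\<forall>p\<in>P. e p \<noteq> 0" using insert.prems by auto
  have cP: "card (insert q P) = card P + 1" using insert.hyps by simp
  have "\<forall>m. M \<le> m \<and> m < M + int (card P) \<longrightarrow> (\<Sum>p\<in>P. d' p * e p powi m) = 0"
  proof (intro allI impI)
    fix m assume m: "M \<le> m \<and> m < M + int (card P)"
    have s1: "(\<Sum>p\<in>insert q P. d p * e p powi (m+1)) = 0"
      using insert.prems(3) m cP by simp
    have s2: "(\<Sum>p\<in>insert q P. d p * e p powi m) = 0"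
      using insert.prems(3) m cP by simp
    have "(\<Sum>p\<in>insert q P. d' p * e p powi m) =
          (\<Sum>p\<in>insert q P. d p * e p powi (m+1)) - e q * (\<Sum>p\<in>insert q P. d p * e p powi m)"
      unfolding sum_distrib_left sum_subtractf[symmetric]
      apply (rule sum.cong[OF refl])
      using insert.prems(2) by (auto simp: d'_def power_int_add algebra_simps)
    also have "\<dots> = 0" using s1 s2 by simp
    finally have "(\<Sum>p\<in>insert q P. d' p * e p powi m) = 0" .
    then show "(\<Sum>p\<in>P. d' p * e p powi m) = 0"
      using insert.hyps by (simp add: d'_def)
  qed
  from insert.IH[OF inj nz this] have z: "\<forall>p\<in>P. d' p = 0" .
  have dz: "\<forall>p\<in>P. d p = 0"
  proof
    fix p assume p: "p \<in> P"
    have "e p \<noteq> e q" using insert.prems(1) insert.hyps(2) p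
      unfolding inj_on_def by (metis insertCI)
    then show "d p = 0" using z p by (auto simp: d'_def)
  qed
  have "(\<Sum>p\<in>insert q P. d p * e p powi M) = 0"
    using insert.prems(3) cP by simp
  then have "d q * e q powi M = 0" using insert.hyps dz by simp
  then have "d q = 0" using insert.prems(2) by simp
  then show ?case using dz by simp
qed


lemma cv2: "char_val (pair2 a b) p = p$1 powi a * p$2 powi b"
  unfolding char_val_def pair2_def UNIV_2 by simp

lemma part1: "strictly_pd K_ex"
  unfolding strictly_pd_def
proof (intro allI impI)
  fix f :: "int^2 \<Rightarrow> complex"
  assume tp: "trig_poly f" and van: "\<forall>\<gamma>\<in>K_ex. f \<gamma> = 0"
  obtain n :: nat and c :: "nat \<Rightarrow> complex" and x :: "nat \<Rightarrow> complex^2" where xt: "\<forall>i<n. x i \<in> torus"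
    and fdef: "f = (\<lambda>\<gamma>. \<Sum>i<n. c i * char_val \<gamma> (x i))"
    using tp unfolding trig_poly_def by blast
  define X where "X = x ` {..<n}"
  define C where "C p = (\<Sum>i\<in>{i. i \<in> {..<n} \<and> x i = p}. c i)" for p
  have finX: "finite X" unfolding X_def by simp
  have frep: "f \<gamma> = (\<Sum>p\<in>X. C p * char_val \<gamma> p)" for \<gamma>
  proof -
    have "(\<Sum>p\<in>X. C p * char_val \<gamma> p) =
      (\<Sum>p\<in>X. \<Sum>i\<in>{i. i \<in> {..<n} \<and> x i = p}. c i * char_val \<gamma> (x i))"
      unfolding C_def sum_distrib_right by (rule sum.cong) auto
    also have "\<dots> = (\<Sum>i<n. c i * char_val \<gamma> (x i))"
      by (rule sum.group) (auto simp: X_def)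
    finally show ?thesis using fdef by simp
  qed
  have Xnz: "p$1 \<noteq> 0 \<and> p$2 \<noteq> 0" if "p \<in> X" for p
  proof -
    have "p \<in> torus" using that xt unfolding X_def by auto
    then have "norm (p$1) = 1" "norm (p$2) = 1" unfolding torus_def by auto
    then show ?thesis by auto
  qed
  define B where "B = (\<lambda>p. p$2) ` X"
  have finB: "finite B" unfolding B_def using finX by simp
  define D where "D a \<beta> = (\<Sum>p\<in>{p. p\<in>X \<and> p$2 = \<beta>}. C p * p$1 powi a)" for a \<beta>
  have Dz: "\<forall>\<beta>\<in>B. D a \<beta> = 0" if a: "a \<ge> int (card B) + 1" for a
  proof (rule vander[where e="\<lambda>\<beta>. \<beta>" and M="-a"])
    show "finite B" by (rule finB)
    show "inj_on (\<lambda>\<beta>. \<beta>) B" by simp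
    show "\<forall>p\<in>B. p \<noteq> 0" using Xnz unfolding B_def by auto
    show "\<forall>m. - a \<le> m \<and> m < - a + int (card B) \<longrightarrow> (\<Sum>\<beta>\<in>B. D a \<beta> * \<beta> powi m) = 0"
    proof (intro allI impI)
      fix m assume m: "- a \<le> m \<and> m < - a + int (card B)"
      have "(\<Sum>\<beta>\<in>B. D a \<beta> * \<beta> powi m) =
         (\<Sum>\<beta>\<in>B. \<Sum>p\<in>{p. p\<in>X \<and> p$2 = \<beta>}. C p * (p$1 powi a * p$2 powi m))"
        unfolding D_def sum_distrib_right by (rule sum.cong) (auto simp: mult.assoc)
      also have "\<dots> = (\<Sum>p\<in>X. C p * (p$1 powi a * p$2 powi m))"
        by (rule sum.group) (auto simp: B_def finX finB)
      also have "\<dots> = f (pair2 a m)" unfolding frep cv2 ..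
      also have "\<dots> = 0"
      proof -
        have "pair2 a m \<in> K_ex" using m a unfolding K_ex_def pair2_def by auto
        then show ?thesis using van by blast
      qed
      finally show "(\<Sum>\<beta>\<in>B. D a \<beta> * \<beta> powi m) = 0" .
    qed
  qed
  have Cz: "C p = 0" if p: "p \<in> X" for p
  proof -
    define P where "P = {q. q\<in>X \<and> q$2 = p$2}"
    have "\<forall>q\<in>P. C q = 0"
    proof (rule vander[where e="\<lambda>q. q$1" and M="int (card B) + 1"])
      show "finite P" unfolding P_def using finX by simp
      show "inj_on (\<lambda>q. q$1) P" unfolding P_def inj_on_def
        by (simp add: vec_eq_iff forall_2)
      show "\<forall>q\<in>P. q$1 \<noteq> 0" using Xnz unfolding P_def by auto
      show "\<forall>m. int (card B) + 1 \<le> m \<and> m < int (card B) + 1 + int (card P) \<longrightarrow>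
         (\<Sum>q\<in>P. C q * q$1 powi m) = 0"
      proof (intro allI impI)
        fix m assume m: "int (card B) + 1 \<le> m \<and> m < int (card B) + 1 + int (card P)"
        have "p$2 \<in> B" using p unfolding B_def by auto
        then have "D m (p$2) = 0" using Dz m by auto
        then show "(\<Sum>q\<in>P. C q * q$1 powi m) = 0" unfolding D_def P_def .
      qed
    qed
    moreover have "p \<in> P" using p unfolding P_def by auto
    ultimately show ?thesis by auto
  qed
  show "f = (\<lambda>_. 0)"
  proof
    fix \<gamma> show "f \<gamma> = 0" unfolding frep using Cz by simp
  qed
qed

lemma part2: "\<not> strictly_pd {w::int^1. pair2 g (w $ 1) \<in> K_ex}"
proof -
  define G :: int where "G = \<bar>g\<bar>"
  define N :: nat where "N = nat (2*G+2)"
  have NG: "int N = 2*G+2" unfolding N_def G_def by simp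
  have Npos: "N > 0" using NG G_def by linarith
  define \<theta> where "\<theta> = 2*pi / real N"
  define x :: "nat \<Rightarrow> complex^1" where "x k = (\<chi> i. cis (real k * \<theta>))" for k
  define c :: "nat \<Rightarrow> complex" where "c k = cis (- (real k * of_int (G+1)) * \<theta>)" for k
  define f where "f = (\<lambda>\<gamma>::int^1. \<Sum>i<N. c i * char_val \<gamma> (x i))"
  have tp: "trig_poly f" unfolding trig_poly_def f_def
    by (rule exI[of _ N], rule exI[of _ c], rule exI[of _ x]) (auto simp: torus_def x_def)
  have fval: "f w = (\<Sum>k<N. (cis (of_int (w$1 - (G+1)) * \<theta>)) ^ k)" for w
    unfolding f_def
  proof (rule sum.cong[OF refl])
    fix k assume "k \<in> {..<N}"
    have "c k * char_val w (x k) = cis (- (real k * of_int (G+1)) * \<theta>) * cis (of_int (w$1) * (real k * \<theta>))"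
      unfolding c_def char_val_def x_def by (simp add: cis_power_int)
    also have "\<dots> = cis (real k * (of_int (w$1 - (G+1)) * \<theta>))"
      by (simp add: cis_mult algebra_simps)
    also have "\<dots> = (cis (of_int (w$1 - (G+1)) * \<theta>)) ^ k"
      by (rule Complex.DeMoivre[symmetric])
    finally show "c k * char_val w (x k) = (cis (of_int (w$1 - (G+1)) * \<theta>)) ^ k" .
  qed
  have rN: "(cis (of_int j * \<theta>)) ^ N = 1" for j :: int
  proof -
    have "(cis (of_int j * \<theta>)) ^ N = cis (of_int j * (2 * pi))"
      using Npos by (simp add: Complex.DeMoivre \<theta>_def)
    also have "\<dots> = 1" by (auto simp: cis_eq_1_iff)
    finally show ?thesis .
  qed
  have r1: "cis (of_int j * \<theta>) = 1 \<longleftrightarrow> (\<exists>n::int. j = n * int N)" for j :: int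
  proof -
    have "cis (of_int j * \<theta>) = 1 \<longleftrightarrow> (\<exists>n::int. of_int j * \<theta> = of_int n * (2*pi))"
      by (rule cis_eq_1_iff)
    also have "\<dots> \<longleftrightarrow> (\<exists>n::int. j = n * int N)"
    proof -
      have "of_int j * \<theta> = of_int n * (2*pi) \<longleftrightarrow> j = n * int N" for n :: int
      proof -
        have "of_int j * \<theta> = of_int n * (2*pi) \<longleftrightarrow> real_of_int j = of_int n * real N"
          using Npos pi_gt_zero unfolding \<theta>_def by (auto simp: field_simps)
        also have "\<dots> \<longleftrightarrow> j = n * int N"
          by (metis of_int_eq_iff of_int_mult of_int_of_nat_eq)
        finally show ?thesis .
      qed
      then show ?thesis by simp
    qed
    finally show ?thesis .
  qed
  have vanish: "f w = 0" if w: "w \<in> {w::int^1. pair2 g (w $ 1) \<in> K_ex}" for w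
  proof -
    have g1: "g \<ge> 1" "\<bar>w$1\<bar> \<le> g" using w unfolding K_ex_def pair2_def by auto
    define j where "j = w$1 - (G+1)"
    have jr: "- int N < j" "j < 0" using g1 NG unfolding j_def G_def by auto
    have "\<not> (\<exists>n::int. j = n * int N)"
    proof
      assume "\<exists>n::int. j = n * int N"
      then obtain n :: int where n: "j = n * int N" by blast
      show False
      proof (cases "n \<ge> 0")
        case True then have "n * int N \<ge> 0" by simp
        then show False using n jr by linarith
      next
        case False then have "n \<le> -1" by simp
        then have "n * int N \<le> -1 * int N" by (rule mult_right_mono) simp
        then show False using n jr by linarith
      qed
    qed
    then have "cis (of_int j * \<theta>) \<noteq> 1" using r1 by blast
    then show ?thesis unfolding fval j_def[symmetric] sum_gp_strict using rN by simp
  qed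
  have nz: "f (\<chi> i. G+1) \<noteq> 0"
  proof -
    have "f (\<chi> i. G+1) = of_nat N" unfolding fval sum_gp_strict by simp
    then show ?thesis using Npos by simp
  qed
  show ?thesis unfolding strictly_pd_def
  proof
    assume "\<forall>f. trig_poly f \<longrightarrow> (\<forall>\<gamma>\<in>{w::int^1. pair2 g (w $ 1) \<in> K_ex}. f \<gamma> = 0) \<longrightarrow> f = (\<lambda>_. 0)"
    then have "f = (\<lambda>_. 0)" using tp vanish by blast
    then show False using nz by simp
  qed
qed


theorem mainTheorem13:
  shows "strictly_pd K_ex \<and>
         {g::int. strictly_pd {w::int^1. pair2 g (w $ 1) \<in> K_ex}} = {}"
  using part1 part2 by blast

end
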